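(* Let $M>0$ and let $\phi$ be a real odd $C^\infty$ $2\pi$-periodic function with zero mean such that $\|\partial_x^2w\|_H^2-(w\partial_x\phi,w)\ge M\|w\|_H^2$ for all $w\in H^2$ with $w(0)=0$. For $s\in\mathbb R$ put $\phi_s(x)=\phi(x-s)$ and for $u\in H$ define $F(u):=\min_{s\in[-\pi,\pi]}\|u-\phi_s\|_H^2$. Let $u(t)\in H_0$, $t\in[0,T]$, be smooth. Then $t\mapsto F(u(t))$ is absolutely continuous and $$\frac{d}{dt}F(u(t))=\frac{d}{dt}\|v(t)\|_H^2=2(\partial_tu(t),v(t))\quad\text{for almost all }t\in[0,T],$$ where $v(t)=u(t)-\phi_{s^*(t)}$ and $s^*(t)$ is a minimizer in the definition of $F(u(t))$.
   Context: $H=L^2_{per}(-\pi,\pi)$ with inner product $(v,w)=\frac1{2\pi}\int_{-\pi}^{\pi}v\bar w\,dx$; $H_0$ is the subspace of zero-mean functions; $H^2$ is the periodic Sobolev space. *)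

theory Defs
  imports "HOL-Analysis.Analysis"
begin

definition per2pi :: "(real \<Rightarrow> real) \<Rightarrow> bool" where
  "per2pi f \<longleftrightarrow> (\<forall>x. f (x + 2 * pi) = f x)"

definition ipH :: "(real \<Rightarrow> real) \<Rightarrow> (real \<Rightarrow> real) \<Rightarrow> real" where
  "ipH f g = (1 / (2 * pi)) * integral {-pi..pi} (\<lambda>x. f x * g x)"

definition normsqH :: "(real \<Rightarrow> real) \<Rightarrow> real" where
  "normsqH f = ipH f f"

definition abs_cont_on :: "real \<Rightarrow> real \<Rightarrow> (real \<Rightarrow> real) \<Rightarrow> bool" where
  "abs_cont_on a b f \<longleftrightarrow>
     (\<forall>\<epsilon>>0. \<exists>\<delta>>0. \<forall>(n::nat) (l::nat \<Rightarrow> real) (r::nat \<Rightarrow> real).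
        (\<forall>i<n. a \<le> l i \<and> l i \<le> r i \<and> r i \<le> b) \<and>
        (\<forall>i<n. \<forall>j<n. i \<noteq> j \<longrightarrow> r i \<le> l j \<or> r j \<le> l i) \<and>
        (\<Sum>i<n. r i - l i) < \<delta>
        \<longrightarrow> (\<Sum>i<n. \<bar>f (r i) - f (l i)\<bar>) < \<epsilon>)"

definition smooth1 :: "(real \<Rightarrow> real) \<Rightarrow> bool" where
  "smooth1 f \<longleftrightarrow> (\<forall>n. \<forall>x. (deriv ^^ n) f differentiable (at x))"

definition pt :: "(real \<Rightarrow> real \<Rightarrow> real) \<Rightarrow> real \<Rightarrow> real \<Rightarrow> real" where
  "pt g = (\<lambda>t x. deriv (\<lambda>\<tau>. g \<tau> x) t)"

definition px :: "(real \<Rightarrow> real \<Rightarrow> real) \<Rightarrow> real \<Rightarrow> real \<Rightarrow> real" where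
  "px g = (\<lambda>t x. deriv (\<lambda>\<xi>. g t \<xi>) x)"

fun pderivs :: "bool list \<Rightarrow> (real \<Rightarrow> real \<Rightarrow> real) \<Rightarrow> real \<Rightarrow> real \<Rightarrow> real" where
  "pderivs [] g = g"
| "pderivs (b # bs) g = (if b then pt else px) (pderivs bs g)"

definition smooth2 :: "(real \<Rightarrow> real \<Rightarrow> real) \<Rightarrow> bool" where
  "smooth2 u \<longleftrightarrow> (\<forall>bs. continuous_on UNIV (\<lambda>(t, x). pderivs bs u t x) \<and>
      (\<forall>t x. (\<lambda>\<tau>. pderivs bs u \<tau> x) differentiable (at t) \<and>
             (\<lambda>\<xi>. pderivs bs u t \<xi>) differentiable (at x)))"

text \<open>Periodic Sobolev space H^2 (real-valued): w is C^1, 2pi-periodic, w' absolutely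
  continuous, and w'' (the a.e. derivative of w') is square integrable.\<close>

definition H2per :: "(real \<Rightarrow> real) \<Rightarrow> bool" where
  "H2per w \<longleftrightarrow> per2pi w \<and> (\<forall>x. w differentiable (at x)) \<and>
     abs_cont_on (-pi) pi (deriv w) \<and>
     (\<lambda>x. (deriv (deriv w) x)\<^sup>2) integrable_on {-pi..pi}"

text \<open>F(u) = min over s in [-pi,pi] of |u - phi_s|^2, phi_s x = phi (x - s)
  (the minimum is attained; we write it as an infimum).\<close>

definition Fdist :: "(real \<Rightarrow> real) \<Rightarrow> (real \<Rightarrow> real) \<Rightarrow> real" where
  "Fdist \<phi> f = Inf ((\<lambda>s. normsqH (\<lambda>x. f x - \<phi> (x - s))) ` {-pi..pi})"

end

theory Submission
  imports Defs
begin

lemma concave_countable_nondiff: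
  fixes h :: "real \<Rightarrow> real" and a b :: real
  assumes sl: "\<And>w x z. a < w \<Longrightarrow> w < x \<Longrightarrow> x < z \<Longrightarrow> z < b \<Longrightarrow>
     (h z - h w)/(z - w) \<le> (h x - h w)/(x - w) \<and> (h z - h x)/(z - x) \<le> (h z - h w)/(z - w)"
  shows "\<exists>N. countable N \<and> (\<forall>x. a < x \<and> x < b \<and> x \<notin> N \<longrightarrow> h differentiable (at x))"
proof -
  define sl where "sl = (\<lambda>x y. (h y - h x) / (y - x))"
  have slsym: "sl x y = sl y x" for x y unfolding sl_def
    by (cases "x = y") (auto simp: field_simps)
  have mono1: "sl x z \<le> sl x y" if "a < x" "x < y" "y < z" "z < b" for x y z
    using sl[OF that] unfolding sl_def by simp
  have chain: "sl x z \<le> sl w x" if "a < w" "w < x" "x < z" "z < b" for w x z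
    using sl[OF that] unfolding sl_def by (smt (verit))
  have mono2: "sl y x \<le> sl w x" if "a < w" "w < y" "y < x" "x < b" for w x y
    using sl[OF that] unfolding sl_def by (simp add: slsym sl_def)
  define A where "A x = Sup ((\<lambda>z. sl x z) ` {x<..<b})" for x
  define B where "B x = Inf ((\<lambda>w. sl w x) ` {a<..<x})" for x
  have Aup: "sl x z \<le> A x" if "a < x" "x < z" "z < b" for x z
  proof -
    obtain w where "a < w" "w < x" using \<open>a < x\<close> dense by blast
    hence "bdd_above ((\<lambda>z. sl x z) ` {x<..<b})"
      using chain[of w x] by (intro bdd_aboveI2[where M="sl w x"]) auto
    thus ?thesis unfolding A_def using that by (intro cSup_upper) auto
  qed
  have Alow: "A x \<le> sl w x" if "a < w" "w < x" "x < b" for x w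
  proof -
    have "{x<..<b} \<noteq> {}" using that by auto
    thus ?thesis unfolding A_def using chain[of w x] that by (intro cSup_least) auto
  qed
  have Bdn: "B x \<le> sl w x" if "a < w" "w < x" "x < b" for x w
  proof -
    obtain z where "x < z" "z < b" using \<open>x < b\<close> dense by blast
    hence "bdd_below ((\<lambda>w. sl w x) ` {a<..<x})"
      using chain[of _ x z] by (intro bdd_belowI2[where m="sl x z"]) auto
    thus ?thesis unfolding B_def using that by (intro cInf_lower) auto
  qed
  have AB: "A x \<le> B x" if "a < x" "x < b" for x
  proof -
    have "{a<..<x} \<noteq> {}" using that by auto
    thus ?thesis unfolding B_def using Alow that by (intro cInf_greatest) auto
  qed
  have Bge: "sl x z \<ge> B z" if "a < x" "x < z" "z < b" for x z
    using Bdn[of x z] that by simp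
  define N where "N = {x. a < x \<and> x < b \<and> A x < B x}"
  have "\<forall>x\<in>N. \<exists>q\<in>\<rat>. A x < q \<and> q < B x" unfolding N_def using Rats_dense_in_real by blast
  then obtain q where q: "\<And>x. x \<in> N \<Longrightarrow> q x \<in> \<rat> \<and> A x < q x \<and> q x < B x" by metis
  have lt: "q y < q x" if "x \<in> N" "y \<in> N" "x < y" for x y
  proof -
    have "q y < B y" using q that by auto
    also have "B y \<le> sl x y" using Bge[of x y] that unfolding N_def by auto
    also have "sl x y \<le> A x" using Aup[of x y] that unfolding N_def by auto
    also have "A x < q x" using q that by auto
    finally show ?thesis .
  qed
  have "inj_on q N"
    by (intro inj_onI) (metis lt linorder_neq_iff order_less_irrefl)
  moreover have "countable (q ` N)"
    using q by (intro countable_subset[OF _ countable_rat]) auto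
  ultimately have cN: "countable N" using countable_image_inj_on by blast
  have "h differentiable (at x)" if "a < x" "x < b" "x \<notin> N" for x
  proof -
    have ABe: "A x = B x" using AB[OF that(1,2)] that unfolding N_def by auto
    have "((\<lambda>y. (h y - h x) / (y - x)) \<longlongrightarrow> A x) (at x)"
    proof (rule LIM_I)
      fix r :: real assume r: "0 < r"
      have ne1: "{x<..<b} \<noteq> {}" using that by auto
      have "\<exists>z\<in>{x<..<b}. A x - r < sl x z"
      proof (rule ccontr)
        assume "\<not> ?thesis"
        hence "A x \<le> A x - r" unfolding A_def using ne1 by (intro cSup_least) (auto simp: A_def)
        thus False using r by simp
      qed
      then obtain z where z: "x < z" "z < b" "A x - r < sl x z" by auto
      have ne2: "{a<..<x} \<noteq> {}" using that by auto
      have "\<exists>w\<in>{a<..<x}. sl w x < B x + r"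
      proof (rule ccontr)
        assume "\<not> ?thesis"
        hence "B x + r \<le> B x" unfolding B_def using ne2 by (intro cInf_greatest) (auto simp: B_def)
        thus False using r by simp
      qed
      then obtain w where w: "a < w" "w < x" "sl w x < B x + r" by auto
      show "\<exists>s>0. \<forall>y. y \<noteq> x \<and> norm (y - x) < s \<longrightarrow> norm ((h y - h x) / (y - x) - A x) < r"
      proof (intro exI[of _ "min (z - x) (x - w)"] conjI allI impI)
        show "0 < min (z - x) (x - w)" using z w by auto
        fix y assume y: "y \<noteq> x \<and> norm (y - x) < min (z - x) (x - w)"
        have e: "(h y - h x) / (y - x) = sl x y" unfolding sl_def ..
        show "norm ((h y - h x) / (y - x) - A x) < r"
        proof (cases "x < y")
          case True
          hence "y < z" "y < b" using y z by auto
          have "sl x z \<le> sl x y" using mono1[of x y z] True \<open>y < z\<close> z that by auto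
          moreover have "sl x y \<le> A x" using Aup[of x y] True \<open>y < b\<close> that by auto
          ultimately show ?thesis using z e by auto
        next
          case False
          hence yx: "y < x" "w < y" using y w by auto
          have "sl y x \<le> sl w x" using mono2[of w y x] yx w that by auto
          moreover have "B x \<le> sl y x" using Bdn[of y x] yx w that by auto
          ultimately show ?thesis using w e ABe slsym[of x y] by auto
        qed
      qed
    qed
    thus ?thesis using has_field_derivative_iff real_differentiable_def by blast
  qed
  thus ?thesis using cN by blast
qed

lemma taylor_quad:
  fixes g g' g'' :: "real \<Rightarrow> real"
  assumes d1: "\<And>\<tau>. (g has_real_derivative g' \<tau>) (at \<tau>)"
    and d2: "\<And>\<tau>. (g' has_real_derivative g'' \<tau>) (at \<tau>)"
    and K: "\<And>\<tau>. \<tau> \<in> {a..b} \<Longrightarrow> \<bar>g'' \<tau>\<bar> \<le> K"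
    and t: "t \<in> {a..b}" and x: "x \<in> {a..b}"
  shows "\<bar>g x - g t - g' t * (x - t)\<bar> \<le> K * (x - t)^2"
proof (cases "x = t")
  case True thus ?thesis using K[OF t] by simp
next
  case False
  define diff where "diff = (\<lambda>m::nat. if m = 0 then g else if m = 1 then g' else g'')"
  have "\<exists>\<xi>. (if x < t then x < \<xi> \<and> \<xi> < t else t < \<xi> \<and> \<xi> < x) \<and>
    g x = (\<Sum>m<2. (diff m t / fact m) * (x - t)^m) + (diff 2 \<xi> / fact 2) * (x - t)^2"
    by (rule Taylor[of 2 diff g a b t x]) (use t x False d1 d2 in \<open>auto simp: diff_def less_2_cases_iff\<close>)
  then obtain \<xi> where xi: "(if x < t then x < \<xi> \<and> \<xi> < t else t < \<xi> \<and> \<xi> < x)"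
    and eq: "g x = (\<Sum>m<2. (diff m t / fact m) * (x - t)^m) + (diff 2 \<xi> / fact 2) * (x - t)^2" by blast
  have "\<xi> \<in> {a..b}" using xi t x by (auto split: if_splits)
  hence Kx: "\<bar>g'' \<xi>\<bar> \<le> K" by (rule K)
  have "g x - g t - g' t * (x - t) = g'' \<xi> / 2 * (x - t)^2"
    using eq by (simp add: diff_def numeral_2_eq_2)
  hence "\<bar>g x - g t - g' t * (x - t)\<bar> = \<bar>g'' \<xi> / 2 * (x - t)^2\<bar>" by (simp only:)
  also have "\<dots> = \<bar>g'' \<xi>\<bar> / 2 * (x - t)^2" by (simp add: abs_mult)
  also have "\<dots> \<le> K * (x - t)^2" by (intro mult_right_mono) (use Kx in auto)
  finally show ?thesis .
qed

lemma quad_deriv: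
  fixes G :: "real \<Rightarrow> real"
  assumes t: "a < t" "t < b"
    and q: "\<And>x. x \<in> {a..b} \<Longrightarrow> \<bar>G x - G t - D * (x - t)\<bar> \<le> C * (x - t)^2"
  shows "(G has_real_derivative D) (at t)"
  unfolding has_field_derivative_iff
proof (rule LIM_I)
  fix r :: real assume r: "0 < r"
  show "\<exists>s>0. \<forall>x. x \<noteq> t \<and> norm (x - t) < s \<longrightarrow> norm ((G x - G t) / (x - t) - D) < r"
  proof (intro exI[of _ "min (r / (\<bar>C\<bar> + 1)) (min (t - a) (b - t))"] conjI allI impI)
    show "0 < min (r / (\<bar>C\<bar> + 1)) (min (t - a) (b - t))" using r t by auto
    fix x assume x: "x \<noteq> t \<and> norm (x - t) < min (r / (\<bar>C\<bar> + 1)) (min (t - a) (b - t))"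
    hence xi: "x \<in> {a..b}" by auto
    have nz: "x - t \<noteq> 0" using x by auto
    have "(G x - G t) / (x - t) - D = (G x - G t - D * (x - t)) / (x - t)"
      using nz by (simp add: field_simps)
    hence "\<bar>(G x - G t) / (x - t) - D\<bar> = \<bar>G x - G t - D * (x - t)\<bar> / \<bar>x - t\<bar>"
      by (simp add: abs_divide)
    also have "\<dots> \<le> C * (x - t)^2 / \<bar>x - t\<bar>"
      using q[OF xi] nz by (simp add: divide_right_mono)
    also have "\<dots> = C * \<bar>x - t\<bar>" proof -
      have "(x - t)^2 = \<bar>x - t\<bar> * \<bar>x - t\<bar>" by (simp add: power2_eq_square)
      hence "C * (x - t)^2 / \<bar>x - t\<bar> = C * (\<bar>x - t\<bar> * \<bar>x - t\<bar>) / \<bar>x - t\<bar>" by (simp only:)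
      also have "\<dots> = C * \<bar>x - t\<bar>" using nz by (simp del: abs_mult_self_eq)
      finally show ?thesis .
    qed
    also have "\<dots> \<le> \<bar>C\<bar> * \<bar>x - t\<bar>" by (simp add: mult_right_mono)
    also have "\<dots> < (\<bar>C\<bar> + 1) * (r / (\<bar>C\<bar> + 1))"
    proof -
      have "\<bar>x - t\<bar> < r / (\<bar>C\<bar> + 1)" using x by auto
      hence "\<bar>C\<bar> * \<bar>x - t\<bar> \<le> \<bar>C\<bar> * (r / (\<bar>C\<bar> + 1))" by (intro mult_left_mono) auto
      also have "\<dots> < (\<bar>C\<bar> + 1) * (r / (\<bar>C\<bar> + 1))" by (intro mult_strict_right_mono) (use r in auto)
      finally show ?thesis .
    qed
    also have "\<dots> = r" by simp
    finally show "norm ((G x - G t) / (x - t) - D) < r" by simp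
  qed
qed

lemma bound2:
  fixes f :: "real \<Rightarrow> real \<Rightarrow> real"
  assumes "continuous_on UNIV (\<lambda>(t, x). f t x)"
  shows "\<exists>B. \<forall>t\<in>{a..b}. \<forall>x\<in>{c..d}. \<bar>f t x\<bar> \<le> B"
proof -
  let ?S = "(\<lambda>(t, x). f t x) ` ({a..b} \<times> {c..d})"
  have "compact ?S"
    by (intro compact_continuous_image continuous_on_subset[OF assms] compact_Times compact_Icc) auto
  hence "bounded ?S" by (rule compact_imp_bounded)
  then obtain B where B: "\<And>y. y \<in> ?S \<Longrightarrow> norm y \<le> B" unfolding bounded_iff by blast
  have "\<bar>f t x\<bar> \<le> B" if "t \<in> {a..b}" "x \<in> {c..d}" for t x
  proof -
    have "f t x \<in> ?S" using that by (intro image_eqI[where x="(t, x)"]) auto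
    thus ?thesis using B by fastforce
  qed
  thus ?thesis by blast
qed

lemma bound1:
  fixes f :: "real \<Rightarrow> real"
  assumes "continuous_on UNIV f"
  shows "\<exists>B. \<forall>x\<in>{c..d}. \<bar>f x\<bar> \<le> B"
proof -
  have "compact (f ` {c..d})"
    by (intro compact_continuous_image continuous_on_subset[OF assms] compact_Icc) auto
  hence "bounded (f ` {c..d})" by (rule compact_imp_bounded)
  then obtain B where B: "\<And>y. y \<in> f ` {c..d} \<Longrightarrow> norm y \<le> B" unfolding bounded_iff by blast
  thus ?thesis by fastforce
qed


lemma slopes:
  fixes hw hx hz w x z :: real
  assumes "w < x" "x < z" and c: "(z - x) * hw + (x - w) * hz \<le> (z - w) * hx"
  shows "(hz - hw)/(z - w) \<le> (hx - hw)/(x - w) \<and> (hz - hx)/(z - x) \<le> (hz - hw)/(z - w)"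
proof
  have p1: "0 < z - w" "0 < x - w" "0 < z - x" using assms by auto
  have "(hz - hw) * (x - w) \<le> (hx - hw) * (z - w)" using c by (simp add: algebra_simps)
  thus "(hz - hw)/(z - w) \<le> (hx - hw)/(x - w)" using p1 by (simp add: divide_le_eq le_divide_eq field_simps)
  have "(hz - hx) * (z - w) \<le> (hz - hw) * (z - x)" using c by (simp add: algebra_simps)
  thus "(hz - hx)/(z - x) \<le> (hz - hw)/(z - w)" using p1 by (simp add: divide_le_eq le_divide_eq field_simps)
qed

lemma setup_facts:
  fixes u :: "real \<Rightarrow> real \<Rightarrow> real" and \<phi> :: "real \<Rightarrow> real"
  assumes u_smooth: "smooth2 u" and phi_smooth: "smooth1 \<phi>"
  shows "continuous_on UNIV (\<lambda>(t, x). u t x)" "continuous_on UNIV (\<lambda>(t, x). pt u t x)"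
    "continuous_on UNIV (\<lambda>(t, x). pt (pt u) t x)"
    "\<And>\<tau> x. ((\<lambda>\<tau>. u \<tau> x) has_real_derivative pt u \<tau> x) (at \<tau>)"
    "\<And>\<tau> x. ((\<lambda>\<tau>. pt u \<tau> x) has_real_derivative pt (pt u) \<tau> x) (at \<tau>)"
    "\<And>\<tau>. continuous_on UNIV (u \<tau>)" "\<And>\<tau>. continuous_on UNIV (pt u \<tau>)"
    "continuous_on UNIV \<phi>"
proof -
  have s: "\<And>bs. continuous_on UNIV (\<lambda>(t, x). pderivs bs u t x) \<and>
      (\<forall>t x. (\<lambda>\<tau>. pderivs bs u \<tau> x) differentiable (at t) \<and>
             (\<lambda>\<xi>. pderivs bs u t \<xi>) differentiable (at x))"
    using u_smooth unfolding smooth2_def by blast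
  show "continuous_on UNIV (\<lambda>(t, x). u t x)" using s[of "[]"] by simp
  show "continuous_on UNIV (\<lambda>(t, x). pt u t x)" using s[of "[True]"] by simp
  show "continuous_on UNIV (\<lambda>(t, x). pt (pt u) t x)" using s[of "[True,True]"] by simp
  show "((\<lambda>\<tau>. u \<tau> x) has_real_derivative pt u \<tau> x) (at \<tau>)" for \<tau> x
    using s[of "[]"] DERIV_deriv_iff_real_differentiable by (simp add: pt_def)
  show "((\<lambda>\<tau>. pt u \<tau> x) has_real_derivative pt (pt u) \<tau> x) (at \<tau>)" for \<tau> x
    using s[of "[True]"] DERIV_deriv_iff_real_differentiable by (simp add: pt_def[of "pt u"])
  show "continuous_on UNIV (u \<tau>)" for \<tau>
    using s[of "[]"] by (auto intro!: continuous_at_imp_continuous_on differentiable_imp_continuous_within)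
  show "continuous_on UNIV (pt u \<tau>)" for \<tau>
    using s[of "[True]"] by (auto intro!: continuous_at_imp_continuous_on differentiable_imp_continuous_within)
  have "\<forall>x. \<phi> differentiable (at x)" using phi_smooth unfolding smooth1_def
    by (metis funpow_0)
  thus "continuous_on UNIV \<phi>"
    by (auto intro!: continuous_at_imp_continuous_on differentiable_imp_continuous_within)
qed

lemma contw:
  fixes f g :: "real \<Rightarrow> real"
  assumes "continuous_on UNIV f" "continuous_on UNIV g"
  shows "continuous_on S (\<lambda>x. f x - g (x - s))"
proof -
  have "continuous_on UNIV (\<lambda>x. g (x - s))"
    by (rule continuous_on_compose2[OF assms(2)]) (auto intro!: continuous_intros)
  thus ?thesis using assms(1) by (auto intro!: continuous_intros intro: continuous_on_subset)
qed

lemma quad_G: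
  fixes u :: "real \<Rightarrow> real \<Rightarrow> real" and \<phi> :: "real \<Rightarrow> real"
  assumes cu: "\<And>\<tau>. continuous_on UNIV (u \<tau>)" and cpt: "\<And>\<tau>. continuous_on UNIV (pt u \<tau>)"
    and cphi: "continuous_on UNIV \<phi>"
    and du: "\<And>\<tau> x. ((\<lambda>\<tau>. u \<tau> x) has_real_derivative pt u \<tau> x) (at \<tau>)"
    and dut: "\<And>\<tau> x. ((\<lambda>\<tau>. pt u \<tau> x) has_real_derivative pt (pt u) \<tau> x) (at \<tau>)"
    and hB0: "\<forall>t\<in>{a..b}. \<forall>x\<in>{-pi..pi}. \<bar>u t x\<bar> \<le> B0"
    and hB1: "\<forall>t\<in>{a..b}. \<forall>x\<in>{-pi..pi}. \<bar>pt u t x\<bar> \<le> B1"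
    and hB2: "\<forall>t\<in>{a..b}. \<forall>x\<in>{-pi..pi}. \<bar>pt (pt u) t x\<bar> \<le> B2"
    and hP: "\<forall>y\<in>{-2*pi..2*pi}. \<bar>\<phi> y\<bar> \<le> P"
    and s: "s \<in> {-pi..pi}" and t: "t \<in> {a..b}" and \<tau>: "\<tau> \<in> {a..b}"
  shows "\<bar>normsqH (\<lambda>x. u \<tau> x - \<phi> (x - s)) - normsqH (\<lambda>x. u t x - \<phi> (x - s))
           - 2 * ipH (\<lambda>x. pt u t x) (\<lambda>x. u t x - \<phi> (x - s)) * (\<tau> - t)\<bar>
         \<le> (2 * B1^2 + 2 * (B0 + P) * B2) * (\<tau> - t)^2"
proof -
  define K where "K = 2 * B1^2 + 2 * (B0 + P) * B2"
  define w where "w = (\<lambda>\<tau> x. u \<tau> x - \<phi> (x - s))"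
  define e where "e = (\<lambda>x. w \<tau> x * w \<tau> x - w t x * w t x - 2 * (pt u t x * w t x) * (\<tau> - t))"
  have pw: "\<bar>e x\<bar> \<le> K * (\<tau> - t)^2" if x: "x \<in> {-pi..pi}" for x
  proof -
    have x0: "\<bar>u t x\<bar> \<le> B0" "\<bar>pt u t x\<bar> \<le> B1" "\<bar>pt (pt u) t x\<bar> \<le> B2"
      using hB0 hB1 hB2 t x by blast+
    have "(0::real) \<in> {-2*pi..2*pi}" using pi_ge_zero by auto
    hence "\<bar>\<phi> 0\<bar> \<le> P" using hP by blast
    hence B0: "0 \<le> B0" "0 \<le> B1" "0 \<le> B2" "0 \<le> P" using x0 by linarith+
    have wb: "\<bar>w \<tau>' x\<bar> \<le> B0 + P" if "\<tau>' \<in> {a..b}" for \<tau>'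
    proof -
      have "x - s \<in> {-2*pi..2*pi}" using x s by auto
      hence "\<bar>\<phi> (x - s)\<bar> \<le> P" using hP by blast
      moreover have "\<bar>u \<tau>' x\<bar> \<le> B0" using hB0 that x by blast
      ultimately show ?thesis unfolding w_def by linarith
    qed
    define g' where "g' = (\<lambda>\<tau>. 2 * (pt u \<tau> x * w \<tau> x))"
    define g'' where "g'' = (\<lambda>\<tau>. 2 * (pt (pt u) \<tau> x * w \<tau> x + pt u \<tau> x * pt u \<tau> x))"
    have dw: "((\<lambda>\<tau>. w \<tau> x) has_real_derivative pt u \<tau>' x) (at \<tau>')" for \<tau>'
      unfolding w_def using DERIV_diff[OF du[of x \<tau>'] DERIV_const[of "\<phi> (x - s)"]] by simp
    have d1: "((\<lambda>\<tau>. w \<tau> x * w \<tau> x) has_real_derivative g' \<tau>') (at \<tau>')" for \<tau>'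
      using DERIV_mult[OF dw dw] by (simp add: g'_def algebra_simps)
    have d2: "(g' has_real_derivative g'' \<tau>') (at \<tau>')" for \<tau>'
      unfolding g'_def using DERIV_cmult[OF DERIV_mult[OF dut[of x \<tau>'] dw], of 2]
      by (simp add: g''_def algebra_simps)
    have g''b: "\<bar>g'' \<tau>'\<bar> \<le> K" if "\<tau>' \<in> {a..b}" for \<tau>'
    proof -
      have a1: "\<bar>pt (pt u) \<tau>' x * w \<tau>' x\<bar> \<le> B2 * (B0 + P)"
        unfolding abs_mult using hB2 that x wb[OF that] B0 by (intro mult_mono) auto
      have a2: "\<bar>pt u \<tau>' x * pt u \<tau>' x\<bar> \<le> B1 * B1"
        unfolding abs_mult using hB1 that x B0 by (intro mult_mono) auto
      have "\<bar>g'' \<tau>'\<bar> \<le> 2 * \<bar>pt (pt u) \<tau>' x * w \<tau>' x\<bar> + 2 * \<bar>pt u \<tau>' x * pt u \<tau>' x\<bar>"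
      proof -
        have "\<bar>g'' \<tau>'\<bar> = 2 * \<bar>pt (pt u) \<tau>' x * w \<tau>' x + pt u \<tau>' x * pt u \<tau>' x\<bar>"
          unfolding g''_def by (simp only: abs_mult)
        also have "\<dots> \<le> 2 * (\<bar>pt (pt u) \<tau>' x * w \<tau>' x\<bar> + \<bar>pt u \<tau>' x * pt u \<tau>' x\<bar>)"
          by (intro mult_left_mono abs_triangle_ineq) simp
        also have "\<dots> = 2 * \<bar>pt (pt u) \<tau>' x * w \<tau>' x\<bar> + 2 * \<bar>pt u \<tau>' x * pt u \<tau>' x\<bar>"
          by (simp only: distrib_left)
        finally show ?thesis .
      qed
      moreover have "K = 2 * (B1 * B1) + 2 * (B2 * (B0 + P))" unfolding K_def by (simp add: power2_eq_square algebra_simps)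
      ultimately show ?thesis using a1 a2 by linarith
    qed
    have "\<bar>w \<tau> x * w \<tau> x - w t x * w t x - g' t * (\<tau> - t)\<bar> \<le> K * (\<tau> - t)^2"
      by (rule taylor_quad[OF d1 d2 g''b t \<tau>])
    thus ?thesis unfolding e_def g'_def by simp
  qed
  have cw: "continuous_on {-pi..pi} (w \<tau>')" for \<tau>'
    unfolding w_def by (rule contw[OF cu cphi])
  have cpt': "continuous_on {-pi..pi} (pt u \<tau>')" for \<tau>'
    using cpt continuous_on_subset by blast
  have i1: "(\<lambda>x. w \<tau>' x * w \<tau>' x) integrable_on {-pi..pi}" for \<tau>'
    by (intro integrable_continuous_interval continuous_intros cw)
  have i2: "(\<lambda>x. pt u t x * w t x) integrable_on {-pi..pi}"
    by (intro integrable_continuous_interval continuous_intros cw cpt')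
  have ie: "integral {-pi..pi} e = integral {-pi..pi} (\<lambda>x. w \<tau> x * w \<tau> x)
      - integral {-pi..pi} (\<lambda>x. w t x * w t x) - 2 * integral {-pi..pi} (\<lambda>x. pt u t x * w t x) * (\<tau> - t)"
  proof -
    have "integral {-pi..pi} e = integral {-pi..pi} (\<lambda>x. w \<tau> x * w \<tau> x - w t x * w t x)
       - integral {-pi..pi} (\<lambda>x. (2 * (\<tau> - t)) * (pt u t x * w t x))"
      unfolding e_def by (subst integral_diff[symmetric]) (auto intro!: integrable_continuous_interval continuous_intros cw cpt' simp: algebra_simps)
    also have "\<dots> = integral {-pi..pi} (\<lambda>x. w \<tau> x * w \<tau> x)
      - integral {-pi..pi} (\<lambda>x. w t x * w t x) - 2 * integral {-pi..pi} (\<lambda>x. pt u t x * w t x) * (\<tau> - t)"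
      by (subst integral_diff) (auto simp: i1 i2)
    finally show ?thesis .
  qed
  have "norm (integral {-pi..pi} e) \<le> integral {-pi..pi} (\<lambda>x. K * (\<tau> - t)^2)"
    by (rule integral_norm_bound_integral) (auto simp: pw[unfolded e_def] e_def intro!: integrable_continuous_interval continuous_intros cw cpt')
  also have "\<dots> = 2 * pi * (K * (\<tau> - t)^2)" by simp
  finally have ib: "\<bar>integral {-pi..pi} e\<bar> \<le> 2 * pi * (K * (\<tau> - t)^2)" by simp
  have "normsqH (\<lambda>x. u \<tau> x - \<phi> (x - s)) - normsqH (\<lambda>x. u t x - \<phi> (x - s))
           - 2 * ipH (\<lambda>x. pt u t x) (\<lambda>x. u t x - \<phi> (x - s)) * (\<tau> - t) = integral {-pi..pi} e / (2 * pi)"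
    unfolding ie normsqH_def ipH_def w_def by (simp add: field_simps)
  also have "\<bar>\<dots>\<bar> \<le> K * (\<tau> - t)^2" using ib by (simp add: abs_divide divide_le_eq mult.commute)
  finally show ?thesis unfolding K_def .
qed

theorem lemma3p8:
  fixes M T :: real and \<phi> :: "real \<Rightarrow> real" and u :: "real \<Rightarrow> real \<Rightarrow> real"
  assumes M_pos: "M > 0"
    and phi_smooth: "smooth1 \<phi>"
    and phi_odd: "\<forall>x. \<phi> (- x) = - \<phi> x"
    and phi_per: "per2pi \<phi>"
    and phi_mean: "integral {-pi..pi} \<phi> = 0"
    and coercive: "\<forall>w. H2per w \<and> w 0 = 0 \<longrightarrow>
        normsqH (deriv (deriv w)) - ipH (\<lambda>x. w x * deriv \<phi> x) w \<ge> M * normsqH w"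
    and u_smooth: "smooth2 u"
    and u_per: "\<forall>t\<in>{0..T}. per2pi (u t)"
    and u_mean: "\<forall>t\<in>{0..T}. integral {-pi..pi} (u t) = 0"
  shows "abs_cont_on 0 T (\<lambda>t. Fdist \<phi> (u t)) \<and>
    (AE t in lborel. t \<in> {0..T} \<longrightarrow>
       (\<forall>s\<in>{-pi..pi}. normsqH (\<lambda>x. u t x - \<phi> (x - s)) = Fdist \<phi> (u t) \<longrightarrow>
          ((\<lambda>\<tau>. Fdist \<phi> (u \<tau>)) has_real_derivative
             2 * ipH (\<lambda>x. pt u t x) (\<lambda>x. u t x - \<phi> (x - s))) (at t)))"
proof -
  note sf = setup_facts[OF u_smooth phi_smooth]
  define a0 where "a0 = (-1::real)"
  define b0 where "b0 = \<bar>T\<bar> + 1"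
  have ab0: "a0 < 0" "T < b0" "0 < b0" "b0 - a0 \<ge> 0" unfolding a0_def b0_def by auto
  obtain B0 where hB0: "\<forall>t\<in>{a0..b0}. \<forall>x\<in>{-pi..pi}. \<bar>u t x\<bar> \<le> B0" using bound2[OF sf(1)] by blast
  obtain B1 where hB1: "\<forall>t\<in>{a0..b0}. \<forall>x\<in>{-pi..pi}. \<bar>pt u t x\<bar> \<le> B1" using bound2[OF sf(2)] by blast
  obtain B2 where hB2: "\<forall>t\<in>{a0..b0}. \<forall>x\<in>{-pi..pi}. \<bar>pt (pt u) t x\<bar> \<le> B2" using bound2[OF sf(3)] by blast
  obtain P where hP: "\<forall>y\<in>{-2*pi..2*pi}. \<bar>\<phi> y\<bar> \<le> P" using bound1[OF sf(8)] by blast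
  have in0: "(0::real) \<in> {a0..b0}" "(0::real) \<in> {-pi..pi}" "(0::real) \<in> {-2*pi..2*pi}"
    using ab0 pi_ge_zero by auto
  have "\<bar>u 0 0\<bar> \<le> B0" "\<bar>pt u 0 0\<bar> \<le> B1" "\<bar>pt (pt u) 0 0\<bar> \<le> B2" "\<bar>\<phi> 0\<bar> \<le> P"
    using hB0 hB1 hB2 hP in0 by blast+
  hence Bnn: "0 \<le> B0" "0 \<le> B1" "0 \<le> B2" "0 \<le> P" by linarith+
  define K where "K = 2 * B1^2 + 2 * (B0 + P) * B2"
  have Knn: "0 \<le> K" unfolding K_def using Bnn by auto
  define G where "G = (\<lambda>t s. normsqH (\<lambda>x. u t x - \<phi> (x - s)))"
  define D where "D = (\<lambda>t s. 2 * ipH (\<lambda>x. pt u t x) (\<lambda>x. u t x - \<phi> (x - s)))"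
  define F where "F = (\<lambda>t. Fdist \<phi> (u t))"
  have FG: "F t = Inf ((\<lambda>s. G t s) ` {-pi..pi})" for t unfolding F_def Fdist_def G_def ..
  have quad: "\<bar>G \<tau> s - G t s - D t s * (\<tau> - t)\<bar> \<le> K * (\<tau> - t)^2"
    if "s \<in> {-pi..pi}" "t \<in> {a0..b0}" "\<tau> \<in> {a0..b0}" for s t \<tau>
    unfolding G_def D_def K_def by (rule quad_G[OF sf(6) sf(7) sf(8) sf(4) sf(5) hB0 hB1 hB2 hP that])
  have Gnn: "0 \<le> G t s" for t s
  proof -
    have "0 \<le> integral {-pi..pi} (\<lambda>x. (u t x - \<phi> (x - s)) * (u t x - \<phi> (x - s)))"
      by (cases "(\<lambda>x. (u t x - \<phi> (x - s)) * (u t x - \<phi> (x - s))) integrable_on {-pi..pi}")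
         (auto intro: integral_nonneg simp: not_integrable_integral)
    thus ?thesis unfolding G_def normsqH_def ipH_def by simp
  qed
  have Flow: "F t \<le> G t s" if "s \<in> {-pi..pi}" for t s
    unfolding FG by (rule cInf_lower) (use that in \<open>auto intro!: bdd_belowI2[where m=0] Gnn\<close>)
  have Fgr: "c \<le> F t" if "\<And>s. s \<in> {-pi..pi} \<Longrightarrow> c \<le> G t s" for c t
    unfolding FG by (rule cInf_greatest) (use that pi_ge_zero in auto)
  define E where "E = 2 * (B1 * (B0 + P))"
  have Db: "\<bar>D t s\<bar> \<le> E" if s: "s \<in> {-pi..pi}" and t: "t \<in> {a0..b0}" for t s
  proof -
    have pb: "norm (pt u t x * (u t x - \<phi> (x - s))) \<le> B1 * (B0 + P)" if x: "x \<in> {-pi..pi}" for x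
    proof -
      have "x - s \<in> {-2*pi..2*pi}" using x s by auto
      hence "\<bar>\<phi> (x - s)\<bar> \<le> P" using hP by blast
      moreover have "\<bar>u t x\<bar> \<le> B0" "\<bar>pt u t x\<bar> \<le> B1" using hB0 hB1 t x by blast+
      ultimately have "\<bar>u t x - \<phi> (x - s)\<bar> \<le> B0 + P" by linarith
      thus ?thesis unfolding real_norm_def abs_mult using \<open>\<bar>pt u t x\<bar> \<le> B1\<close> Bnn
        by (intro mult_mono) auto
    qed
    have cw: "continuous_on {-pi..pi} (\<lambda>x. u t x - \<phi> (x - s))" by (rule contw[OF sf(6) sf(8)])
    have cp: "continuous_on {-pi..pi} (pt u t)" using sf(7) continuous_on_subset by blast
    have "norm (integral {-pi..pi} (\<lambda>x. pt u t x * (u t x - \<phi> (x - s)))) \<le> integral {-pi..pi} (\<lambda>x. B1 * (B0 + P))"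
      by (rule integral_norm_bound_integral) (auto simp: pb[unfolded real_norm_def] intro!: integrable_continuous_interval continuous_intros cw cp)
    also have "\<dots> = 2 * pi * (B1 * (B0 + P))" by simp
    finally have "\<bar>integral {-pi..pi} (\<lambda>x. pt u t x * (u t x - \<phi> (x - s)))\<bar> \<le> 2 * pi * (B1 * (B0 + P))" by simp
    thus ?thesis unfolding D_def ipH_def E_def by (simp add: abs_mult divide_le_eq mult.commute mult.left_commute)
  qed
  define L where "L = E + K * (b0 - a0)"
  have Lnn: "0 \<le> L" unfolding L_def E_def using Bnn Knn ab0 by auto
  have Lip: "F t1 \<le> F t2 + L * \<bar>t1 - t2\<bar>" if t: "t1 \<in> {a0..b0}" "t2 \<in> {a0..b0}" for t1 t2
  proof -
    have "F t1 - L * \<bar>t1 - t2\<bar> \<le> G t2 s" if s: "s \<in> {-pi..pi}" for s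
    proof -
      have q: "\<bar>G t1 s - G t2 s - D t2 s * (t1 - t2)\<bar> \<le> K * (t1 - t2)^2" by (rule quad[OF s t(2) t(1)])
      have "\<bar>D t2 s * (t1 - t2)\<bar> \<le> E * \<bar>t1 - t2\<bar>" unfolding abs_mult
        by (rule mult_right_mono[OF Db[OF s t(2)]]) simp
      moreover have "K * (t1 - t2)^2 \<le> K * (b0 - a0) * \<bar>t1 - t2\<bar>"
      proof -
        have "(t1 - t2)^2 = \<bar>t1 - t2\<bar> * \<bar>t1 - t2\<bar>" by (simp add: power2_eq_square)
        also have "\<dots> \<le> (b0 - a0) * \<bar>t1 - t2\<bar>" using t by (intro mult_right_mono) auto
        finally show ?thesis using Knn by (simp add: mult.assoc mult_left_mono)
      qed
      moreover have "F t1 \<le> G t1 s" by (rule Flow[OF s])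
      ultimately show ?thesis using q unfolding L_def by (simp add: algebra_simps abs_le_iff)
    qed
    hence "F t1 - L * \<bar>t1 - t2\<bar> \<le> F t2" by (rule Fgr)
    thus ?thesis by simp
  qed
  have AC: "abs_cont_on 0 T F"
    unfolding abs_cont_on_def
  proof (intro allI impI)
    fix \<epsilon> :: real assume e: "0 < \<epsilon>"
    show "\<exists>\<delta>>0. \<forall>n l r. (\<forall>i<n. 0 \<le> l i \<and> l i \<le> r i \<and> r i \<le> T) \<and>
        (\<forall>i<n. \<forall>j<n. i \<noteq> j \<longrightarrow> r i \<le> l j \<or> r j \<le> l i) \<and> (\<Sum>i<n. r i - l i) < \<delta> \<longrightarrow>
        (\<Sum>i<n. \<bar>F (r i) - F (l i)\<bar>) < \<epsilon>"
    proof (intro exI[of _ "\<epsilon> / (L + 1)"] conjI allI impI)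
      show "0 < \<epsilon> / (L + 1)" using e Lnn by auto
      fix n l r assume H: "(\<forall>i<n. 0 \<le> l i \<and> l i \<le> r i \<and> r i \<le> T) \<and>
        (\<forall>i<n. \<forall>j<n. i \<noteq> j \<longrightarrow> r i \<le> l j \<or> r j \<le> l i) \<and> (\<Sum>i<n. r i - l i) < \<epsilon> / (L + 1)"
      have each: "\<bar>F (r i) - F (l i)\<bar> \<le> L * (r i - l i)" if i: "i < n" for i
      proof -
        have lr: "l i \<in> {a0..b0}" "r i \<in> {a0..b0}" "l i \<le> r i" using H i ab0 by fastforce+
        show ?thesis using Lip[OF lr(1) lr(2)] Lip[OF lr(2) lr(1)] lr(3) by (simp add: abs_le_iff abs_minus_commute)
      qed
      have "(\<Sum>i<n. \<bar>F (r i) - F (l i)\<bar>) \<le> (\<Sum>i<n. L * (r i - l i))" by (rule sum_mono) (use each in auto)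
      also have "\<dots> = L * (\<Sum>i<n. r i - l i)" by (simp add: sum_distrib_left)
      also have "\<dots> \<le> (L + 1) * (\<Sum>i<n. r i - l i)"
      proof -
        have "0 \<le> (\<Sum>i<n. r i - l i)" using H by (intro sum_nonneg) auto
        thus ?thesis by (simp add: distrib_right)
      qed
      also have "\<dots> < (L + 1) * (\<epsilon> / (L + 1))" using H Lnn by (intro mult_strict_left_mono) auto
      also have "\<dots> = \<epsilon>" using Lnn by simp
      finally show "(\<Sum>i<n. \<bar>F (r i) - F (l i)\<bar>) < \<epsilon>" .
    qed
  qed
  define h where "h = (\<lambda>t. F t - K * t^2)"
  have conc: "(z - x) * h w + (x - w) * h z \<le> (z - w) * h x"
    if wxz: "a0 < w" "w < x" "x < z" "z < b0" for w x z
  proof -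
    have ins: "w \<in> {a0..b0}" "x \<in> {a0..b0}" "z \<in> {a0..b0}" using wxz by auto
    define c where "c = ((z - x) * h w + (x - w) * h z) / (z - w) + K * x^2"
    have "c \<le> G x s" if s: "s \<in> {-pi..pi}" for s
    proof -
      have q1: "G w s \<le> G x s + D x s * (w - x) + K * (w - x)^2" using quad[OF s ins(2) ins(1)] by (simp add: abs_le_iff)
      have q2: "G z s \<le> G x s + D x s * (z - x) + K * (z - x)^2" using quad[OF s ins(2) ins(3)] by (simp add: abs_le_iff)
      have m1: "(z - x) * h w \<le> (z - x) * (G x s + D x s * (w - x) + K * (w - x)^2 - K * w^2)"
        unfolding h_def using q1 Flow[OF s, of w] wxz by (intro mult_left_mono) auto
      have m2: "(x - w) * h z \<le> (x - w) * (G x s + D x s * (z - x) + K * (z - x)^2 - K * z^2)"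
        unfolding h_def using q2 Flow[OF s, of z] wxz by (intro mult_left_mono) auto
      have idt: "(z - x) * (G x s + D x s * (w - x) + K * (w - x)^2 - K * w^2)
          + (x - w) * (G x s + D x s * (z - x) + K * (z - x)^2 - K * z^2)
          = (z - w) * (G x s - K * x^2)"
        by (simp add: algebra_simps power2_eq_square)
      have "(z - x) * h w + (x - w) * h z \<le> (z - w) * (G x s - K * x^2)" using m1 m2 idt by linarith
      hence "((z - x) * h w + (x - w) * h z) / (z - w) \<le> G x s - K * x^2"
        using wxz by (simp add: divide_le_eq mult.commute)
      thus ?thesis unfolding c_def by simp
    qed
    hence "c \<le> F x" by (rule Fgr)
    hence "((z - x) * h w + (x - w) * h z) / (z - w) \<le> h x" unfolding c_def h_def by simp
    thus ?thesis using wxz by (simp add: divide_le_eq mult.commute)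
  qed
  obtain N where cN: "countable N" and diffh: "\<And>x. a0 < x \<Longrightarrow> x < b0 \<Longrightarrow> x \<notin> N \<Longrightarrow> h differentiable (at x)"
  proof -
    have sl: "(h z - h w)/(z - w) \<le> (h x - h w)/(x - w) \<and> (h z - h x)/(z - x) \<le> (h z - h w)/(z - w)"
      if "a0 < w" "w < x" "x < z" "z < b0" for w x z
      by (rule slopes[OF that(2,3) conc[OF that]])
    show ?thesis using concave_countable_nondiff[of a0 b0 h, OF sl] that by blast
  qed
  have good: "(\<forall>s\<in>{-pi..pi}. G t s = F t \<longrightarrow> (F has_real_derivative D t s) (at t))"
    if t: "t \<in> {0..T}" "t \<notin> N" for t
  proof (intro ballI impI)
    fix s assume s: "s \<in> {-pi..pi}" and eq: "G t s = F t"
    have tab: "a0 < t" "t < b0" using t ab0 by auto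
    obtain h' where dh: "(h has_real_derivative h') (at t)"
      using diffh[OF tab t(2)] real_differentiable_def by blast
    have Fe: "F = (\<lambda>\<tau>. h \<tau> + K * \<tau>^2)" unfolding h_def by auto
    have dF: "(F has_real_derivative (h' + K * (2 * t))) (at t)"
      unfolding Fe by (rule derivative_eq_intros dh refl | simp)+
    have dG: "((\<lambda>\<tau>. G \<tau> s) has_real_derivative D t s) (at t)"
      by (rule quad_deriv[OF tab, where C=K]) (use quad[OF s] tab in auto)
    have "D t s - (h' + K * (2 * t)) = 0"
    proof (rule DERIV_local_min[OF DERIV_diff[OF dG dF], of 1])
      show "\<forall>y. \<bar>t - y\<bar> < 1 \<longrightarrow> G t s - F t \<le> G y s - F y" using eq Flow[OF s] by auto
    qed simp
    thus "(F has_real_derivative D t s) (at t)" using dF by simp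
  qed
  have AE: "AE t in lborel. t \<in> {0..T} \<longrightarrow>
     (\<forall>s\<in>{-pi..pi}. G t s = F t \<longrightarrow> (F has_real_derivative D t s) (at t))"
    by (rule AE_I'[OF countable_imp_null_set_lborel[OF cN]]) (use good in auto)
  show ?thesis using AC AE unfolding F_def G_def D_def by simp
qed

end
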